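(* For all integers $n\ge k\ge 1$, if $(G,I,O)$ is a geometry with $|V(G)|=n$ and $|O|=k$ which has a flow, then $|E(G)|\le kn-\binom{k+1}{2}$. Equivalently, $\Gamma(n,k)\le kn-\binom{k+1}{2}$.
   Context: Graphs are finite, simple, undirected, without self-loops; $v\sim w$ denotes adjacency. A geometry is $(G,I,O)$ with $I,O\subseteq V(G)$; $O^c=V(G)\setminus O$, $I^c=V(G)\setminus I$. A flow for $(G,I,O)$ is a pair $(f,\preceq)$, $f:O^c\to I^c$ a function, $\preceq$ a partial order on $V(G)$, such that for all $v\in O^c$, $w\in V(G)$: $v\sim f(v)$; $v\preceq f(v)$; $w\sim f(v)\Rightarrow v\preceq w$. $\Gamma(n,k)$ denotes the maximum number of edges of a graph $G$ in a geometry $(G,I,O)$ that has a flow, subject to $|V(G)|=n$ and $|O|=k$. *)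

theory Defs
  imports Main
begin

definition simple_graph :: "'a set \<Rightarrow> ('a \<Rightarrow> 'a \<Rightarrow> bool) \<Rightarrow> bool" where
  "simple_graph V E \<longleftrightarrow> finite V \<and> (\<forall>v w. E v w \<longrightarrow> v \<in> V \<and> w \<in> V)
     \<and> (\<forall>v w. E v w \<longrightarrow> E w v) \<and> (\<forall>v. \<not> E v v)"

definition edges :: "'a set \<Rightarrow> ('a \<Rightarrow> 'a \<Rightarrow> bool) \<Rightarrow> 'a set set" where
  "edges V E = {{v, w} | v w. v \<in> V \<and> w \<in> V \<and> E v w}"

definition is_flow :: "'a set \<Rightarrow> ('a \<Rightarrow> 'a \<Rightarrow> bool) \<Rightarrow> 'a set \<Rightarrow> 'a set
    \<Rightarrow> ('a \<Rightarrow> 'a) \<Rightarrow> 'a rel \<Rightarrow> bool" where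
  "is_flow V E Inp Out f r \<longleftrightarrow>
     partial_order_on V r \<and>
     (\<forall>v \<in> V - Out. f v \<in> V - Inp) \<and>
     (\<forall>v \<in> V - Out. E v (f v)) \<and>
     (\<forall>v \<in> V - Out. (v, f v) \<in> r) \<and>
     (\<forall>v \<in> V - Out. \<forall>w \<in> V. E w (f v) \<longrightarrow> (v, w) \<in> r)"

definition has_flow :: "'a set \<Rightarrow> ('a \<Rightarrow> 'a \<Rightarrow> bool) \<Rightarrow> 'a set \<Rightarrow> 'a set \<Rightarrow> bool" where
  "has_flow V E Inp Out \<longleftrightarrow> (\<exists>f r. is_flow V E Inp Out f r)"

end

theory Submission
  imports Defs
begin

lemma max_exists:
  assumes po: "partial_order_on V r" and fin: "finite V" and S: "S \<subseteq> V" "S \<noteq> {}"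
  shows "\<exists>v\<in>S. \<forall>w\<in>S. (v,w) \<in> r \<longrightarrow> w = v"
proof -
  define h where "h x = card {y\<in>V. (y,x) \<in> r}" for x
  have finS: "finite S" using fin S finite_subset by blast
  have "Max (h ` S) \<in> h ` S" using finS S(2) by (intro Max_in) auto
  then obtain v where v0: "v \<in> S" "h v = Max (h ` S)" by (auto simp del: Max_in)
  have v: "v \<in> S" "\<forall>w\<in>S. h w \<le> h v" using v0 finS by auto
  have tr: "trans r" and an: "antisym r" and sub: "r \<subseteq> V \<times> V" and rf: "refl_on V r"
    using partial_order_onD[OF po] by auto
  show ?thesis
  proof (intro bexI[OF _ v(1)] ballI impI)
    fix w assume w: "w \<in> S" "(v,w) \<in> r"
    show "w = v"
    proof (rule ccontr)
      assume ne: "w \<noteq> v"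
      have "{y\<in>V. (y,v) \<in> r} \<subset> {y\<in>V. (y,w) \<in> r}"
      proof
        show "{y\<in>V. (y,v) \<in> r} \<subseteq> {y\<in>V. (y,w) \<in> r}" using w tr by (auto dest: transD)
        have "w \<in> V" using w S by auto
        hence "(w,w) \<in> r" using rf by (auto simp: refl_on_def)
        moreover have "(w,v) \<notin> r" using w ne an by (auto dest: antisymD)
        ultimately show "{y\<in>V. (y,v) \<in> r} \<noteq> {y\<in>V. (y,w) \<in> r}" using \<open>w \<in> V\<close> by blast
      qed
      hence "h v < h w" unfolding h_def by (rule psubset_card_mono[rotated]) (use fin in auto)
      thus False using v(2) w(1) by (meson leD)
    qed
  qed
qed

lemma count_lemma:
  assumes sg: "simple_graph V E" and fl: "is_flow V E Inp Out f r"
  shows "S \<subseteq> V - Out \<Longrightarrow> \<exists>B. B \<subseteq> {{w, f v} | v w. v \<in> S \<and> w \<in> S \<and> w \<noteq> f v \<and> \<not> E w (f v)}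
            \<and> card B = card S choose 2 \<and> finite B"
proof (induction "card S" arbitrary: S)
  case 0
  have "finite S" using 0 sg finite_subset unfolding simple_graph_def by blast
  hence "S = {}" using 0 by simp
  thus ?case by (intro exI[of _ "{}"]) auto
next
  case (Suc m)
  have po: "partial_order_on V r" using fl unfolding is_flow_def by auto
  have fin: "finite V" using sg unfolding simple_graph_def by auto
  have tr: "trans r" and an: "antisym r" and sub: "r \<subseteq> V \<times> V"
    using partial_order_onD[OF po] by auto
  have finS: "finite S" using Suc.prems fin finite_subset by blast
  have Sne: "S \<noteq> {}" using Suc.hyps(2) by auto
  obtain v where v: "v \<in> S" "\<forall>w\<in>S. (v,w) \<in> r \<longrightarrow> w = v"
    using max_exists[OF po fin _ Sne] Suc.prems by blast
  define S' where "S' = S - {v}"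
  have cS': "m = card S'" using Suc.hyps(2) v(1) finS unfolding S'_def by simp
  obtain B' where B': "B' \<subseteq> {{w, f v} | v w. v \<in> S' \<and> w \<in> S' \<and> w \<noteq> f v \<and> \<not> E w (f v)}"
     "card B' = card S' choose 2" "finite B'"
    using Suc.hyps(1)[OF cS'] Suc.prems unfolding S'_def by blast
  have vV: "v \<in> V - Out" using v Suc.prems by auto
  have fl1: "\<And>u. u \<in> V - Out \<Longrightarrow> (u, f u) \<in> r" and fl2: "\<And>u w. u \<in> V - Out \<Longrightarrow> w \<in> V \<Longrightarrow> E w (f u) \<Longrightarrow> (u,w) \<in> r"
    and fl3: "\<And>u. u \<in> V - Out \<Longrightarrow> E u (f u)"
    using fl unfolding is_flow_def by auto
  have notr: "\<And>w. w \<in> S' \<Longrightarrow> (v,w) \<notin> r" using v unfolding S'_def by auto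
  have wne: "\<And>w. w \<in> S' \<Longrightarrow> w \<noteq> f v" using notr fl1[OF vV] by blast
  have wnE: "\<And>w. w \<in> S' \<Longrightarrow> \<not> E w (f v)" using notr fl2[OF vV] Suc.prems unfolding S'_def by blast
  define C where "C = (\<lambda>w. {w, f v}) ` S'"
  have injC: "inj_on (\<lambda>w. {w, f v}) S'"
    by (rule inj_onI) (use wne in \<open>auto simp: doubleton_eq_iff\<close>)
  have cC: "card C = m" unfolding C_def using card_image[OF injC] cS' by simp
  have finC: "finite C" unfolding C_def using finS S'_def by simp
  have disj: "B' \<inter> C = {}"
  proof (rule ccontr)
    assume "B' \<inter> C \<noteq> {}"
    then obtain x where x: "x \<in> B'" "x \<in> C" by blast
    from x(2) obtain w where w: "w \<in> S'" "x = {w, f v}" unfolding C_def by blast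
    from x(1) B'(1) have "x \<in> {{w, f v} | v w. v \<in> S' \<and> w \<in> S' \<and> w \<noteq> f v \<and> \<not> E w (f v)}" by (rule subsetD[rotated])
    then obtain v' w' where vw0: "v' \<in> S'" "w' \<in> S'" "x = {w', f v'}" by blast
    have vw: "v' \<in> S'" "w' \<in> S'" "w \<in> S'" "{w', f v'} = {w, f v}" using vw0 w by auto
    have v'V: "v' \<in> V - Out" using vw Suc.prems unfolding S'_def by auto
    show False
    proof (cases "f v' = f v")
      case True
      have "(v', v) \<in> r" using fl2[OF v'V] fl3[OF vV] True vV by auto
      moreover have "(v, v') \<in> r" using fl2[OF vV] fl3[OF v'V] True v'V by auto
      ultimately have "v = v'" using an by (auto dest: antisymD)
      thus False using vw S'_def by auto
    next
      case False
      hence "w' = f v" using vw by (auto simp: doubleton_eq_iff)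
      thus False using notr[OF vw(2)] fl1[OF vV] by simp
    qed
  qed
  have "card (B' \<union> C) = card B' + card C" using card_Un_disjoint[OF B'(3) finC disj] .
  also have "\<dots> = Suc m choose 2" using B'(2) cC cS'
    by (simp add: numeral_2_eq_2)
  finally have cardB: "card (B' \<union> C) = card S choose 2" using Suc.hyps(2) by simp
  have "B' \<union> C \<subseteq> {{w, f v} | v w. v \<in> S \<and> w \<in> S \<and> w \<noteq> f v \<and> \<not> E w (f v)}"
  proof
    fix x assume "x \<in> B' \<union> C"
    then show "x \<in> {{w, f v} | v w. v \<in> S \<and> w \<in> S \<and> w \<noteq> f v \<and> \<not> E w (f v)}"
    proof
      assume "x \<in> B'" then show ?thesis using B'(1) unfolding S'_def by blast
    next
      assume "x \<in> C"
      then obtain w where "w \<in> S'" "x = {w, f v}" unfolding C_def by blast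
      then show ?thesis using wne wnE v(1) unfolding S'_def by blast
    qed
  qed
  thus ?case using cardB B'(3) finC by blast
qed

theorem mainTheorem8:
  fixes V Inp Out :: "'a set" and E :: "'a \<Rightarrow> 'a \<Rightarrow> bool" and n k :: nat
  assumes "simple_graph V E"
    and "Inp \<subseteq> V" and "Out \<subseteq> V"
    and "card V = n" and "card Out = k"
    and "1 \<le> k" and "k \<le> n"
    and "has_flow V E Inp Out"
  shows "int (card (edges V E)) \<le> int (k * n) - int ((k + 1) choose 2)"
proof -
  obtain f r where fl: "is_flow V E Inp Out f r" using assms(8) unfolding has_flow_def by blast
  have fin: "finite V" using assms(1) unfolding simple_graph_def by auto
  obtain B where B: "B \<subseteq> {{w, f v} | v w. v \<in> V - Out \<and> w \<in> V - Out \<and> w \<noteq> f v \<and> \<not> E w (f v)}"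
     "card B = card (V - Out) choose 2" "finite B"
    using count_lemma[OF assms(1) fl, of "V - Out"] by blast
  have cVO: "card (V - Out) = n - k" using assms fin by (simp add: card_Diff_subset finite_subset)
  have fV: "\<And>v. v \<in> V - Out \<Longrightarrow> f v \<in> V" using fl unfolding is_flow_def by auto
  have symE: "\<And>a b. E a b \<Longrightarrow> E b a" and irr: "\<And>a. \<not> E a a" and EV: "\<And>a b. E a b \<Longrightarrow> a \<in> V \<and> b \<in> V"
    using assms(1) unfolding simple_graph_def by auto
  define T where "T = {A. A \<subseteq> V \<and> card A = 2}"
  have cT: "card T = n choose 2" unfolding T_def using n_subsets[OF fin] assms(4) by simp
  have finT: "finite T" unfolding T_def using fin by simp
  have eT: "edges V E \<subseteq> T" unfolding T_def edges_def using irr by (auto simp: card_insert_if)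
  have bT: "B \<subseteq> T" unfolding T_def using B(1) fV by (auto simp: card_insert_if)
  have dj: "edges V E \<inter> B = {}"
  proof (rule ccontr)
    assume "edges V E \<inter> B \<noteq> {}"
    then obtain a b v w where "E a b" "{a,b} = {w, f v}" "\<not> E w (f v)"
      using B(1) unfolding edges_def by blast
    thus False using symE by (auto simp: doubleton_eq_iff)
  qed
  have "card (edges V E) + card B \<le> card T"
    using card_Un_disjoint[OF finite_subset[OF eT finT] B(3) dj] card_mono[OF finT, of "edges V E \<union> B"] eT bT
    by simp
  hence le: "card (edges V E) + ((n - k) choose 2) \<le> n choose 2" using B(2) cVO cT by simp
  have ar: "int (n choose 2) = int ((n - k) choose 2) + int (k * n) - int ((k + 1) choose 2)"
  proof -
    have a: "2 * int (m choose 2) = int m * (int m - 1)" for m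
    proof -
      have e: "even (m*(m-1))" by (cases "even m") auto
      hence "2 * (m choose 2) = m * (m - 1)" by (simp add: choose_two)
      hence "2 * int (m choose 2) = int (m * (m - 1))" by linarith
      thus ?thesis by (cases m) (auto simp: algebra_simps)
    qed
    have "2 * int (n choose 2) = 2 * int ((n - k) choose 2) + 2 * int (k * n) - 2 * int ((k + 1) choose 2)"
      unfolding a using assms(7) by (simp add: of_nat_diff algebra_simps)
    thus ?thesis by simp
  qed
  show ?thesis using le ar by linarith
qed

end
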